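(* Let $E,F$ be Banach lattices, let $\mathcal{P}\subseteq \mathrm{L}(E,F)$ be a nonempty set of operators with $\mathcal{P}+\mathcal{P}\subseteq\mathcal{P}$ and $\mathcal{P}-\mathcal{P}\subseteq\mathcal{P}$, and let $T\in\mathrm{L}(E,F)$. (i) $T$ is an r-$\mathcal{P}$-operator if and only if $T\in\mathcal{P}$ and $T$ is $\mathcal{P}$-dominated. (ii) Assume the modulus $|T|$ of $T$ exists in $\mathrm{L}(E,F)$ and that $\mathcal{P}$ satisfies the domination property. Then $T$ is an r-$\mathcal{P}$-operator if and only if $|T|\in\mathcal{P}$.
   Context: All vector spaces are real; $\mathrm{L}(E,F)$ is the space of bounded linear operators, ordered by $S\le T$ iff $T-S$ is positive. Elements of $\mathcal{P}$ are called $\mathcal{P}$-operators. An operator $T:E\to F$ is an r-$\mathcal{P}$-operator if $T=T_1-T_2$ with $T_1,T_2$ positive operators belonging to $\mathcal{P}$. $\mathcal{P}$ satisfies the domination property if $0\le S\le T\in\mathcal{P}$ implies $S\in\mathcal{P}$. An operator $T\in\mathrm{L}(E,F)$ is $\mathcal{P}$-dominated if there is $U\in\mathcal{P}$ with $T\le U$ and $-T\le U$. *)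

theory Defs
  imports "HOL-Analysis.Analysis"
begin

class banach_lattice = banach + lattice + ordered_real_vector +
  assumes lattice_norm: "sup x (- x) \<le> sup y (- y) \<Longrightarrow> norm x \<le> norm y"

definition positive_op :: "('a::banach_lattice \<Rightarrow>\<^sub>L 'b::banach_lattice) \<Rightarrow> bool" where
  "positive_op T \<longleftrightarrow> (\<forall>x. 0 \<le> x \<longrightarrow> 0 \<le> blinfun_apply T x)"

definition op_le :: "('a::banach_lattice \<Rightarrow>\<^sub>L 'b::banach_lattice) \<Rightarrow> ('a \<Rightarrow>\<^sub>L 'b) \<Rightarrow> bool" where
  "op_le S T \<longleftrightarrow> positive_op (T - S)"

definition r_P_operator :: "('a::banach_lattice \<Rightarrow>\<^sub>L 'b::banach_lattice) set \<Rightarrow> ('a \<Rightarrow>\<^sub>L 'b) \<Rightarrow> bool" where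
  "r_P_operator P T \<longleftrightarrow>
     (\<exists>T1 T2. positive_op T1 \<and> positive_op T2 \<and> T1 \<in> P \<and> T2 \<in> P \<and> T = T1 - T2)"

definition domination_property :: "('a::banach_lattice \<Rightarrow>\<^sub>L 'b::banach_lattice) set \<Rightarrow> bool" where
  "domination_property P \<longleftrightarrow> (\<forall>S T. op_le 0 S \<and> op_le S T \<and> T \<in> P \<longrightarrow> S \<in> P)"

definition P_dominated :: "('a::banach_lattice \<Rightarrow>\<^sub>L 'b::banach_lattice) set \<Rightarrow> ('a \<Rightarrow>\<^sub>L 'b) \<Rightarrow> bool" where
  "P_dominated P T \<longleftrightarrow> (\<exists>U\<in>P. op_le T U \<and> op_le (- T) U)"

definition is_modulus :: "('a::banach_lattice \<Rightarrow>\<^sub>L 'b::banach_lattice) \<Rightarrow> ('a \<Rightarrow>\<^sub>L 'b) \<Rightarrow> bool" where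
  "is_modulus T M \<longleftrightarrow> op_le T M \<and> op_le (- T) M \<and>
     (\<forall>U. op_le T U \<and> op_le (- T) U \<longrightarrow> op_le M U)"

end

theory Submission
  imports Defs
begin

lemma half_nonneg:
  fixes a :: "'a::ordered_real_vector"
  assumes "0 \<le> a + a" shows "0 \<le> a"
proof -
  have "(1/2::real) *\<^sub>R (a + a) = ((1/2 + 1/2)::real) *\<^sub>R a"
    by (simp only: scaleR_add_right scaleR_add_left)
  hence "a = (1/2::real) *\<^sub>R (a + a)" by simp
  also have "0 \<le> \<dots>" using assms by (intro scaleR_nonneg_nonneg) simp_all
  finally show ?thesis .
qed

lemma pos_iff: "positive_op T \<longleftrightarrow> (\<forall>x. 0 \<le> x \<longrightarrow> 0 \<le> blinfun_apply T x)"
  by (simp add: positive_op_def)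

lemma op_le_iff: "op_le S T \<longleftrightarrow> (\<forall>x. 0 \<le> x \<longrightarrow> blinfun_apply S x \<le> blinfun_apply T x)"
  by (simp add: op_le_def positive_op_def blinfun.diff_left)

lemma pos_from_dom:
  assumes "op_le T U" "op_le (- T) U" shows "positive_op U"
  unfolding pos_iff
proof (intro allI impI)
  fix x :: 'a assume x: "0 \<le> x"
  have "blinfun_apply T x \<le> blinfun_apply U x" "- blinfun_apply T x \<le> blinfun_apply U x"
    using assms x by (auto simp: op_le_iff blinfun.minus_left)
  hence "0 \<le> blinfun_apply U x + blinfun_apply U x"
  proof -
    have "0 \<le> blinfun_apply U x - blinfun_apply T x" "0 \<le> blinfun_apply U x + blinfun_apply T x"
      using \<open>blinfun_apply T x \<le> blinfun_apply U x\<close> \<open>- blinfun_apply T x \<le> blinfun_apply U x\<close>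
      using add_right_mono[OF \<open>- blinfun_apply T x \<le> blinfun_apply U x\<close>, of "blinfun_apply T x"]
      by simp_all
    hence "0 \<le> (blinfun_apply U x - blinfun_apply T x) + (blinfun_apply U x + blinfun_apply T x)"
      by (rule add_nonneg_nonneg)
    thus ?thesis by (simp add: algebra_simps)
  qed
  thus "0 \<le> blinfun_apply U x" by (rule half_nonneg)
qed

lemma dom_sum:
  assumes "positive_op A" "positive_op B"
  shows "op_le (A - B) (A + B) \<and> op_le (- (A - B)) (A + B)"
proof -
  have e1: "(A + B) - (A - B) = B + B" by simp
  have e2: "(A + B) - (- (A - B)) = A + A" by simp
  have "positive_op (B + B)" "positive_op (A + A)" using assms
    by (auto simp: positive_op_def blinfun.add_left intro: add_nonneg_nonneg)
  thus ?thesis unfolding op_le_def e1 e2 by simp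
qed

theorem proposition3p4:
  fixes P :: "('a::banach_lattice \<Rightarrow>\<^sub>L 'b::banach_lattice) set"
    and T :: "'a \<Rightarrow>\<^sub>L 'b"
  assumes "P \<noteq> {}"
    and add: "\<forall>S\<in>P. \<forall>R\<in>P. S + R \<in> P"
    and sub: "\<forall>S\<in>P. \<forall>R\<in>P. S - R \<in> P"
  shows "(r_P_operator P T \<longleftrightarrow> T \<in> P \<and> P_dominated P T) \<and>
         (\<forall>M. is_modulus T M \<and> domination_property P \<longrightarrow>
           (r_P_operator P T \<longleftrightarrow> M \<in> P))"
proof (intro conjI allI impI)
  show "r_P_operator P T \<longleftrightarrow> T \<in> P \<and> P_dominated P T"
  proof
    assume "r_P_operator P T"
    then obtain T1 T2 where h: "positive_op T1" "positive_op T2" "T1 \<in> P" "T2 \<in> P" "T = T1 - T2"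
      unfolding r_P_operator_def by blast
    have "T1 + T2 \<in> P" using add h by blast
    moreover have "op_le T (T1 + T2)" "op_le (- T) (T1 + T2)"
      using h dom_sum by auto
    ultimately show "T \<in> P \<and> P_dominated P T" using sub h unfolding P_dominated_def by blast
  next
    assume "T \<in> P \<and> P_dominated P T"
    then obtain U where U: "T \<in> P" "U \<in> P" "op_le T U" "op_le (- T) U"
      unfolding P_dominated_def by blast
    have "positive_op U" using pos_from_dom U by blast
    moreover have "positive_op (U + T)" using U(4)
      by (simp add: op_le_def)
    moreover have "T = (U + T) - U" by simp
    ultimately show "r_P_operator P T" using U add unfolding r_P_operator_def by blast
  qed
next
  fix M assume a: "is_modulus T M \<and> domination_property P"
  hence M: "op_le T M" "op_le (- T) M" "\<And>U. op_le T U \<Longrightarrow> op_le (- T) U \<Longrightarrow> op_le M U"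
    and dp: "domination_property P"
    unfolding is_modulus_def by blast+
  have Mpos: "positive_op M" using pos_from_dom M by blast
  hence M0: "op_le 0 M" by (simp add: op_le_def)
  show "r_P_operator P T \<longleftrightarrow> M \<in> P"
  proof
    assume "r_P_operator P T"
    then obtain T1 T2 where h: "positive_op T1" "positive_op T2" "T1 \<in> P" "T2 \<in> P" "T = T1 - T2"
      unfolding r_P_operator_def by blast
    have "T1 + T2 \<in> P" using add h by blast
    moreover have "op_le T (T1 + T2)" "op_le (- T) (T1 + T2)"
      using h dom_sum by auto
    ultimately show "M \<in> P" using M(3) M0 dp unfolding domination_property_def by blast
  next
    assume MP: "M \<in> P"
    have pMT: "positive_op (M + T)" using M(2) by (simp add: op_le_def)
    hence "op_le 0 (M + T)" by (simp add: op_le_def)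
    moreover have "op_le (M + T) (M + M)" using M(1)
      by (simp add: op_le_def algebra_simps)
    moreover have "M + M \<in> P" using add MP by blast
    ultimately have "M + T \<in> P" using dp unfolding domination_property_def by blast
    moreover have "T = (M + T) - M" by simp
    ultimately show "r_P_operator P T" using MP Mpos pMT unfolding r_P_operator_def by blast
  qed
qed

end
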